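(* Assume $f$ is Lipschitz and satisfies $\mathbf{(AP)_b}$ with $\lambda_1<b<B$. For every $z\in Z$, the map $t\mapsto u(z,t)=\Psi^{-1}(z+t\phi_1)$ is Lipschitz from $\mathbb{R}$ to $X$, with Lipschitz constant independent of $z$. The height $\tilde h(z,t)$ is Lipschitz in both $z$ and $t$. For every $g=z_g+t_g\phi_1\in Y$ ($z_g\in Z$, $t_g\in\mathbb{R}$), the equation $F(u)=g$, $u\in X$, has as many solutions as the equation $\tilde h(z_g,t)=t_g$ for the unknown $t\in\mathbb{R}$.
   Context: Let $\Omega\subset\mathbb{R}^n$ be a bounded domain with $C^{1,1}$ boundary. Let $Lu=\mathrm{tr}(A(x)D^2u)+b(x)\cdot\nabla u+c(x)u$, where $A\in C(\overline\Omega)$ is symmetric-matrix valued with eigenvalues in $[\lambda,\Lambda]$, $\Lambda\ge\lambda>0$, and $|b|,|c|\le\Lambda$. Fix $p\ge n$, $X=\{u\in W^{2,p}(\Omega):u=0\text{ on }\partial\Omega\}$, $Y=L^p(\Omega)$. $\lambda_1=\sup\{\mu:\exists\,\phi\in W^{2,n}_{\rm loc}(\Omega),\phi>0,(L+\mu)\phi\le0\}$ is the principal (simple) Dirichlet eigenvalue of $-L$ with eigenfunction $\phi_1\in X$, $\phi_1>0$; the adjoint $L^*$ has the same principal eigenvalue with positive eigenfunction $\phi_1^*$; $\langle g,h\rangle=\int_\Omega gh$. $Z=\{g\in Y:\langle g,\phi_1^*\rangle=0\}$, $W=Z\cap X$; $P:Y=Z\oplus\mathbb{R}\phi_1\to Z$,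 $P(z+s\phi_1)=z$. $F(u)=-Lu-f(u)$. Condition $\mathbf{(AP)_b}$ (lower slope normalized to $a=0$, so $0<\lambda_1<b$): $0\le\frac{f(x)-f(y)}{x-y}\le b$ for $x\ne y$, and for some $M\ge0$, $f(s)\ge\max\{bs-M,-M\}$ for all $s$. $B=B(L,\Omega)>\lambda_1$ is a constant (depending only on $L,\Omega$) for which, whenever $\lambda_1<b<B$, there is $c>0$ with $\|\Psi(u)-\Psi(\tilde u)\|_Y\ge c\|u-\tilde u\|_X$ for all $u,\tilde u\in X$, and the map $\Psi:X\to Y$, $\Psi(w+t\phi_1)=P F(w+t\phi_1)+t\phi_1$ ($w\in W$, $t\in\mathbb{R}$), is a bi-Lipschitz homeomorphism. The height function is $\tilde h(z,t)=\langle F(\Psi^{-1}(z+t\phi_1)),\phi_1^*\rangle/\langle\phi_1,\phi_1^*\rangle$, so that $F(u(z,t))=z+\tilde h(z,t)\phi_1$. *)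

theory Defs
  imports "HOL-Analysis.Analysis"
begin

text \<open>The function gamma is written as a function
  on the whole space that does not depend on the k-th coordinate.\<close>

definition C11_fun :: "(real^'n \<Rightarrow> real) \<Rightarrow> bool" where
  "C11_fun \<gamma> \<longleftrightarrow> (\<exists>D. (\<forall>y. (\<gamma> has_derivative D y) (at y)) \<and>
      (\<exists>K. \<forall>y y'. onorm (\<lambda>v. D y v - D y' v) \<le> K * norm (y - y')))"

definition C11_domain :: "(real^'n) set \<Rightarrow> bool" where
  "C11_domain \<Omega> \<longleftrightarrow> open \<Omega> \<and> connected \<Omega> \<and> bounded \<Omega> \<and> \<Omega> \<noteq> {} \<and>
     (\<forall>x0\<in>frontier \<Omega>. \<exists>r>0. \<exists>Q::real^'n^'n. \<exists>k. \<exists>\<gamma>.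
        orthogonal_matrix Q \<and> C11_fun \<gamma> \<and>
        (\<forall>y s. \<gamma> (\<chi> i. if i = k then s else y $ i) = \<gamma> y) \<and>
        \<Omega> \<inter> ball x0 r = {x \<in> ball x0 r. (Q *v x) $ k > \<gamma> (Q *v x)})"

definition Lp_int :: "(real^'n) set \<Rightarrow> real \<Rightarrow> (real^'n \<Rightarrow> real) \<Rightarrow> ennreal" where
  "Lp_int \<Omega> p g = (\<integral>\<^sup>+ x. ennreal (indicator \<Omega> x * \<bar>g x\<bar> powr p) \<partial>lebesgue)"

definition Lp :: "(real^'n) set \<Rightarrow> real \<Rightarrow> (real^'n \<Rightarrow> real) set" where
  "Lp \<Omega> p = {g. g \<in> borel_measurable (lebesgue_on \<Omega>) \<and> Lp_int \<Omega> p g < \<infinity>}"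

definition Lpnorm :: "(real^'n) set \<Rightarrow> real \<Rightarrow> (real^'n \<Rightarrow> real) \<Rightarrow> real" where
  "Lpnorm \<Omega> p g = enn2real (Lp_int \<Omega> p g) powr (1 / p)"

definition ip :: "(real^'n) set \<Rightarrow> (real^'n \<Rightarrow> real) \<Rightarrow> (real^'n \<Rightarrow> real) \<Rightarrow> real" where
  "ip \<Omega> g h = (LINT x:\<Omega>|lebesgue. g x * h x)"

definition pd :: "'n \<Rightarrow> (real^'n \<Rightarrow> real) \<Rightarrow> real^'n \<Rightarrow> real" where
  "pd i \<phi> x = deriv (\<lambda>t. \<phi> (x + t *\<^sub>R axis i 1)) 0"

fun iter_pd :: "'n list \<Rightarrow> (real^'n \<Rightarrow> real) \<Rightarrow> real^'n \<Rightarrow> real" where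
  "iter_pd [] \<phi> = \<phi>"
| "iter_pd (i # is) \<phi> = pd i (iter_pd is \<phi>)"

definition smooth_fun :: "(real^'n \<Rightarrow> real) \<Rightarrow> bool" where
  "smooth_fun \<phi> \<longleftrightarrow> (\<forall>is. iter_pd is \<phi> differentiable_on UNIV)"

definition test_fun :: "(real^'n) set \<Rightarrow> (real^'n \<Rightarrow> real) \<Rightarrow> bool" where
  "test_fun \<Omega> \<phi> \<longleftrightarrow> smooth_fun \<phi> \<and> (\<exists>K. compact K \<and> K \<subseteq> \<Omega> \<and> (\<forall>x. x \<notin> K \<longrightarrow> \<phi> x = 0))"

definition loc_int :: "(real^'n) set \<Rightarrow> (real^'n \<Rightarrow> real) \<Rightarrow> bool" where
  "loc_int \<Omega> u \<longleftrightarrow> (\<forall>K. compact K \<and> K \<subseteq> \<Omega> \<longrightarrow> set_integrable lebesgue K u)"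

definition weak_pd :: "(real^'n) set \<Rightarrow> (real^'n \<Rightarrow> real) \<Rightarrow> 'n \<Rightarrow> (real^'n \<Rightarrow> real) \<Rightarrow> bool" where
  "weak_pd \<Omega> u i v \<longleftrightarrow> loc_int \<Omega> u \<and> loc_int \<Omega> v \<and>
     (\<forall>\<phi>. test_fun \<Omega> \<phi> \<longrightarrow> ip \<Omega> u (pd i \<phi>) = - ip \<Omega> v \<phi>)"

definition weak_pd2 :: "(real^'n) set \<Rightarrow> (real^'n \<Rightarrow> real) \<Rightarrow> 'n \<Rightarrow> 'n \<Rightarrow> (real^'n \<Rightarrow> real) \<Rightarrow> bool" where
  "weak_pd2 \<Omega> u i j w \<longleftrightarrow> loc_int \<Omega> u \<and> loc_int \<Omega> w \<and>
     (\<forall>\<phi>. test_fun \<Omega> \<phi> \<longrightarrow> ip \<Omega> u (pd i (pd j \<phi>)) = ip \<Omega> w \<phi>)"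

definition wd1 :: "(real^'n) set \<Rightarrow> (real^'n \<Rightarrow> real) \<Rightarrow> 'n \<Rightarrow> real^'n \<Rightarrow> real" where
  "wd1 \<Omega> u i = (SOME v. weak_pd \<Omega> u i v)"

definition wd2 :: "(real^'n) set \<Rightarrow> (real^'n \<Rightarrow> real) \<Rightarrow> 'n \<Rightarrow> 'n \<Rightarrow> real^'n \<Rightarrow> real" where
  "wd2 \<Omega> u i j = (SOME w. weak_pd2 \<Omega> u i j w)"

definition W2p :: "(real^'n) set \<Rightarrow> real \<Rightarrow> (real^'n \<Rightarrow> real) set" where
  "W2p \<Omega> p = {u. u \<in> Lp \<Omega> p \<and>
      (\<forall>i. \<exists>v. weak_pd \<Omega> u i v \<and> v \<in> Lp \<Omega> p) \<and>
      (\<forall>i j. \<exists>w. weak_pd2 \<Omega> u i j w \<and> w \<in> Lp \<Omega> p)}"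

definition W2p_loc :: "(real^'n) set \<Rightarrow> real \<Rightarrow> (real^'n \<Rightarrow> real) set" where
  "W2p_loc \<Omega> p = {u. loc_int \<Omega> u \<and>
      (\<forall>i. \<exists>v. weak_pd \<Omega> u i v) \<and> (\<forall>i j. \<exists>w. weak_pd2 \<Omega> u i j w) \<and>
      (\<forall>K. compact K \<and> K \<subseteq> \<Omega> \<longrightarrow>
          u \<in> Lp K p \<and> (\<forall>i. wd1 \<Omega> u i \<in> Lp K p) \<and> (\<forall>i j. wd2 \<Omega> u i j \<in> Lp K p))}"

text \<open>Since p \<ge> n, each element
  has a continuous representative on the closure; we use this canonical representative,
  extended by 0 outside \<Omega>.\<close>
definition Xsp :: "(real^'n) set \<Rightarrow> real \<Rightarrow> (real^'n \<Rightarrow> real) set" where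
  "Xsp \<Omega> p = {u. u \<in> W2p \<Omega> p \<and> continuous_on (closure \<Omega>) u \<and> (\<forall>x. x \<notin> \<Omega> \<longrightarrow> u x = 0)}"

definition Xnorm :: "(real^'n) set \<Rightarrow> real \<Rightarrow> (real^'n \<Rightarrow> real) \<Rightarrow> real" where
  "Xnorm \<Omega> p u = Lpnorm \<Omega> p u + (\<Sum>i\<in>UNIV. Lpnorm \<Omega> p (wd1 \<Omega> u i))
      + (\<Sum>i\<in>UNIV. \<Sum>j\<in>UNIV. Lpnorm \<Omega> p (wd2 \<Omega> u i j))"

definition Lop :: "(real^'n) set \<Rightarrow> (real^'n \<Rightarrow> real^'n^'n) \<Rightarrow> (real^'n \<Rightarrow> real^'n) \<Rightarrow>
    (real^'n \<Rightarrow> real) \<Rightarrow> (real^'n \<Rightarrow> real) \<Rightarrow> real^'n \<Rightarrow> real" where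
  "Lop \<Omega> A bb c u x = (\<Sum>i\<in>UNIV. \<Sum>j\<in>UNIV. A x $ i $ j * wd2 \<Omega> u i j x)
      + (\<Sum>i\<in>UNIV. bb x $ i * wd1 \<Omega> u i x) + c x * u x"

definition lambda1 :: "(real^'n) set \<Rightarrow> (real^'n \<Rightarrow> real^'n^'n) \<Rightarrow> (real^'n \<Rightarrow> real^'n) \<Rightarrow>
    (real^'n \<Rightarrow> real) \<Rightarrow> real" where
  "lambda1 \<Omega> A bb c = Sup {\<mu>. \<exists>\<phi>. \<phi> \<in> W2p_loc \<Omega> (real CARD('n)) \<and> continuous_on \<Omega> \<phi> \<and>
       (\<forall>x\<in>\<Omega>. \<phi> x > 0) \<and> (AE x in lebesgue. x \<in> \<Omega> \<longrightarrow> Lop \<Omega> A bb c \<phi> x + \<mu> * \<phi> x \<le> 0)}"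

definition Fop :: "(real^'n) set \<Rightarrow> (real^'n \<Rightarrow> real^'n^'n) \<Rightarrow> (real^'n \<Rightarrow> real^'n) \<Rightarrow>
    (real^'n \<Rightarrow> real) \<Rightarrow> (real \<Rightarrow> real) \<Rightarrow> (real^'n \<Rightarrow> real) \<Rightarrow> real^'n \<Rightarrow> real" where
  "Fop \<Omega> A bb c f u x = - Lop \<Omega> A bb c u x - f (u x)"

text \<open>Coefficient t of g = z + t \<phi>1 with z in Z.\<close>
definition coef :: "(real^'n) set \<Rightarrow> (real^'n \<Rightarrow> real) \<Rightarrow> (real^'n \<Rightarrow> real) \<Rightarrow> (real^'n \<Rightarrow> real) \<Rightarrow> real" where
  "coef \<Omega> \<phi>1 \<phi>1s g = ip \<Omega> g \<phi>1s / ip \<Omega> \<phi>1 \<phi>1s"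

definition Pproj :: "(real^'n) set \<Rightarrow> (real^'n \<Rightarrow> real) \<Rightarrow> (real^'n \<Rightarrow> real) \<Rightarrow> (real^'n \<Rightarrow> real) \<Rightarrow> real^'n \<Rightarrow> real" where
  "Pproj \<Omega> \<phi>1 \<phi>1s g x = g x - coef \<Omega> \<phi>1 \<phi>1s g * \<phi>1 x"

definition Zsp :: "(real^'n) set \<Rightarrow> real \<Rightarrow> (real^'n \<Rightarrow> real) \<Rightarrow> (real^'n \<Rightarrow> real) set" where
  "Zsp \<Omega> p \<phi>1s = {g \<in> Lp \<Omega> p. ip \<Omega> g \<phi>1s = 0}"

text \<open>Psi(w + t \<phi>1) = P F(w + t \<phi>1) + t \<phi>1, with t = coef u.\<close>
definition Psi where
  "Psi \<Omega> A bb c f \<phi>1 \<phi>1s u x =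
     Pproj \<Omega> \<phi>1 \<phi>1s (Fop \<Omega> A bb c f u) x + coef \<Omega> \<phi>1 \<phi>1s u * \<phi>1 x"

text \<open>Equality in Y = L^p is equality almost everywhere in \<Omega>.\<close>
definition ae_eq :: "(real^'n) set \<Rightarrow> (real^'n \<Rightarrow> real) \<Rightarrow> (real^'n \<Rightarrow> real) \<Rightarrow> bool" where
  "ae_eq \<Omega> g h \<longleftrightarrow> (AE x in lebesgue. x \<in> \<Omega> \<longrightarrow> g x = h x)"

definition Psi_inv where
  "Psi_inv \<Omega> p A bb c f \<phi>1 \<phi>1s g =
     (THE u. u \<in> Xsp \<Omega> p \<and> ae_eq \<Omega> (Psi \<Omega> A bb c f \<phi>1 \<phi>1s u) g)"

definition htilde where
  "htilde \<Omega> p A bb c f \<phi>1 \<phi>1s z t =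
     coef \<Omega> \<phi>1 \<phi>1s (Fop \<Omega> A bb c f (Psi_inv \<Omega> p A bb c f \<phi>1 \<phi>1s (\<lambda>x. z x + t * \<phi>1 x)))"

definition bilip_homeo where
  "bilip_homeo \<Omega> p A bb c f \<phi>1 \<phi>1s \<longleftrightarrow>
     (\<forall>u\<in>Xsp \<Omega> p. Psi \<Omega> A bb c f \<phi>1 \<phi>1s u \<in> Lp \<Omega> p) \<and>
     (\<exists>C. \<forall>u\<in>Xsp \<Omega> p. \<forall>v\<in>Xsp \<Omega> p.
        Lpnorm \<Omega> p (\<lambda>x. Psi \<Omega> A bb c f \<phi>1 \<phi>1s u x - Psi \<Omega> A bb c f \<phi>1 \<phi>1s v x)
          \<le> C * Xnorm \<Omega> p (\<lambda>x. u x - v x)) \<and>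
     (\<exists>c0>0. \<forall>u\<in>Xsp \<Omega> p. \<forall>v\<in>Xsp \<Omega> p.
        Lpnorm \<Omega> p (\<lambda>x. Psi \<Omega> A bb c f \<phi>1 \<phi>1s u x - Psi \<Omega> A bb c f \<phi>1 \<phi>1s v x)
          \<ge> c0 * Xnorm \<Omega> p (\<lambda>x. u x - v x)) \<and>
     (\<forall>g\<in>Lp \<Omega> p. \<exists>u\<in>Xsp \<Omega> p. ae_eq \<Omega> (Psi \<Omega> A bb c f \<phi>1 \<phi>1s u) g)"

text \<open>Condition (AP)_b with lower slope a = 0.\<close>
definition AP :: "(real \<Rightarrow> real) \<Rightarrow> real \<Rightarrow> bool" where
  "AP f b \<longleftrightarrow> (\<forall>x y. x \<noteq> y \<longrightarrow> 0 \<le> (f x - f y) / (x - y) \<and> (f x - f y) / (x - y) \<le> b) \<and>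
     (\<exists>M\<ge>0. \<forall>s. f s \<ge> max (b * s - M) (- M))"

end

theory Submission
  imports Defs
begin

lemma Lp_int_alt: "Lp_int \<Omega> p g = (\<integral>\<^sup>+ x. ennreal (\<bar>indicator \<Omega> x * g x\<bar> powr p) \<partial>lebesgue)"
  unfolding Lp_int_def by (intro nn_integral_cong) (auto simp: indicator_def)

lemma meas_ind:
  fixes g :: "'a::euclidean_space \<Rightarrow> real"
  assumes "\<Omega> \<in> sets lebesgue" "g \<in> borel_measurable (lebesgue_on \<Omega>)"
  shows "(\<lambda>x. indicator \<Omega> x * g x) \<in> borel_measurable lebesgue"
  using assms borel_measurable_restrict_space_iff[of \<Omega> lebesgue g] by simp

lemma meas_Lp_int:
  assumes "\<Omega> \<in> sets lebesgue" "g \<in> borel_measurable (lebesgue_on \<Omega>)"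
  shows "(\<lambda>x. ennreal (\<bar>indicator \<Omega> x * g x\<bar> powr p)) \<in> borel_measurable lebesgue"
  using meas_ind[OF assms] by measurable

lemma Lp_dom:
  assumes "g \<in> borel_measurable (lebesgue_on \<Omega>)" "h \<in> Lp \<Omega> p"
    "\<And>x. x \<in> \<Omega> \<Longrightarrow> \<bar>g x\<bar> \<le> \<bar>h x\<bar>" "p \<ge> 0"
  shows "g \<in> Lp \<Omega> p"
proof -
  have "Lp_int \<Omega> p g \<le> Lp_int \<Omega> p h"
    unfolding Lp_int_def using assms(3,4)
    by (intro nn_integral_mono) (auto simp: indicator_def intro!: powr_mono2)
  then show ?thesis using assms unfolding Lp_def by auto
qed

lemma Lp_int_cong_AE:
  assumes "AE x in lebesgue. x \<in> \<Omega> \<longrightarrow> g x = h x"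
  shows "Lp_int \<Omega> p g = Lp_int \<Omega> p h"
  unfolding Lp_int_def using assms by (intro nn_integral_cong_AE) (auto simp: indicator_def)

lemma Lpnorm_cong_AE:
  assumes "AE x in lebesgue. x \<in> \<Omega> \<longrightarrow> g x = h x"
  shows "Lpnorm \<Omega> p g = Lpnorm \<Omega> p h"
  unfolding Lpnorm_def using Lp_int_cong_AE[OF assms] by simp

lemma Lpnorm_nonneg: "Lpnorm \<Omega> p g \<ge> 0"
  unfolding Lpnorm_def by simp

lemma Lp_int_scale:
  assumes "\<Omega> \<in> sets lebesgue" "g \<in> borel_measurable (lebesgue_on \<Omega>)" "p > 0"
  shows "Lp_int \<Omega> p (\<lambda>x. k * g x) = ennreal (\<bar>k\<bar> powr p) * Lp_int \<Omega> p g"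
proof -
  have "Lp_int \<Omega> p (\<lambda>x. k * g x) = (\<integral>\<^sup>+ x. ennreal (\<bar>k\<bar> powr p) * ennreal (\<bar>indicator \<Omega> x * g x\<bar> powr p) \<partial>lebesgue)"
    unfolding Lp_int_alt
    by (intro nn_integral_cong) (simp add: abs_mult powr_mult ennreal_mult' mult.left_commute)
  also have "\<dots> = ennreal (\<bar>k\<bar> powr p) * Lp_int \<Omega> p g"
    unfolding Lp_int_alt by (rule nn_integral_cmult[OF meas_Lp_int[OF assms(1,2)]])
  finally show ?thesis .
qed

lemma Lpnorm_scale:
  assumes "\<Omega> \<in> sets lebesgue" "g \<in> borel_measurable (lebesgue_on \<Omega>)" "p > 0"
  shows "Lpnorm \<Omega> p (\<lambda>x. k * g x) = \<bar>k\<bar> * Lpnorm \<Omega> p g"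
proof -
  have "Lpnorm \<Omega> p (\<lambda>x. k * g x) = (\<bar>k\<bar> powr p * enn2real (Lp_int \<Omega> p g)) powr (1/p)"
    unfolding Lpnorm_def Lp_int_scale[OF assms] by (simp add: enn2real_mult)
  also have "\<dots> = \<bar>k\<bar> * Lpnorm \<Omega> p g"
    unfolding Lpnorm_def using assms(3) by (simp add: powr_mult powr_powr)
  finally show ?thesis .
qed

lemma Lp_scale:
  assumes "\<Omega> \<in> sets lebesgue" "g \<in> Lp \<Omega> p" "p > 0"
  shows "(\<lambda>x. k * g x) \<in> Lp \<Omega> p"
  using assms Lp_int_scale[OF assms(1) _ assms(3), of g k] unfolding Lp_def
  by (auto simp: ennreal_mult_less_top)

lemma Lp_add:
  assumes "\<Omega> \<in> sets lebesgue" "g \<in> Lp \<Omega> p" "h \<in> Lp \<Omega> p" "p > 0"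
  shows "(\<lambda>x. g x + h x) \<in> Lp \<Omega> p"
proof -
  have mg: "g \<in> borel_measurable (lebesgue_on \<Omega>)" and mh: "h \<in> borel_measurable (lebesgue_on \<Omega>)"
    using assms unfolding Lp_def by auto
  have pt: "\<bar>a + b\<bar> powr p \<le> 2 powr p * (\<bar>a\<bar> powr p + \<bar>b\<bar> powr p)" for a b :: real
  proof -
    have "\<bar>a + b\<bar> \<le> 2 * max \<bar>a\<bar> \<bar>b\<bar>" by auto
    then have "\<bar>a + b\<bar> powr p \<le> (2 * max \<bar>a\<bar> \<bar>b\<bar>) powr p"
      using assms(4) by (intro powr_mono2) auto
    also have "\<dots> = 2 powr p * max \<bar>a\<bar> \<bar>b\<bar> powr p" by (simp add: powr_mult)
    also have "max \<bar>a\<bar> \<bar>b\<bar> powr p \<le> \<bar>a\<bar> powr p + \<bar>b\<bar> powr p"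
      by (cases "\<bar>a\<bar> \<le> \<bar>b\<bar>") (auto simp: max_def)
    finally show ?thesis by (simp add: mult_left_mono)
  qed
  have mG: "(\<lambda>x. ennreal (\<bar>indicator \<Omega> x * g x\<bar> powr p)) \<in> borel_measurable lebesgue"
    by (rule meas_Lp_int[OF assms(1) mg])
  have mH: "(\<lambda>x. ennreal (\<bar>indicator \<Omega> x * h x\<bar> powr p)) \<in> borel_measurable lebesgue"
    by (rule meas_Lp_int[OF assms(1) mh])
  have ptw: "ennreal (\<bar>indicator \<Omega> x * (g x + h x)\<bar> powr p) \<le>
      ennreal (2 powr p) * (ennreal (\<bar>indicator \<Omega> x * g x\<bar> powr p) + ennreal (\<bar>indicator \<Omega> x * h x\<bar> powr p))" for x
  proof -
    have e: "ennreal (2 powr p) * (ennreal (\<bar>indicator \<Omega> x * g x\<bar> powr p) + ennreal (\<bar>indicator \<Omega> x * h x\<bar> powr p))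
       = ennreal (2 powr p * (\<bar>indicator \<Omega> x * g x\<bar> powr p + \<bar>indicator \<Omega> x * h x\<bar> powr p))"
      by (simp add: ennreal_mult ennreal_plus)
    have "indicator \<Omega> x * (g x + h x) = indicator \<Omega> x * g x + indicator \<Omega> x * h x"
      by (simp add: distrib_left)
    then show ?thesis unfolding e by (intro ennreal_leI) (simp only: pt)
  qed
  have "Lp_int \<Omega> p (\<lambda>x. g x + h x) \<le> (\<integral>\<^sup>+ x. ennreal (2 powr p) * (ennreal (\<bar>indicator \<Omega> x * g x\<bar> powr p) + ennreal (\<bar>indicator \<Omega> x * h x\<bar> powr p)) \<partial>lebesgue)"
    unfolding Lp_int_alt by (intro nn_integral_mono ptw)
  also have "\<dots> = ennreal (2 powr p) * (\<integral>\<^sup>+ x. ennreal (\<bar>indicator \<Omega> x * g x\<bar> powr p) + ennreal (\<bar>indicator \<Omega> x * h x\<bar> powr p) \<partial>lebesgue)"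
    by (intro nn_integral_cmult borel_measurable_add mG mH)
  also have "\<dots> = ennreal (2 powr p) * (Lp_int \<Omega> p g + Lp_int \<Omega> p h)"
    unfolding Lp_int_alt using mG mH by (simp add: nn_integral_add)
  also have "\<dots> < \<infinity>" using assms unfolding Lp_def by (simp add: ennreal_mult_less_top)
  finally show ?thesis using assms mg mh unfolding Lp_def by auto
qed

lemma open_lebesgue: "open S \<Longrightarrow> S \<in> sets lebesgue"
  by (metis borel_open sets_completionI_sets sets_lborel)

lemma open_pos_measure:
  fixes S :: "'a::euclidean_space set"
  assumes "open S" "S \<noteq> {}"
  shows "emeasure lebesgue S \<noteq> 0"
proof
  assume z: "emeasure lebesgue S = 0"
  obtain x where x: "x \<in> S" using assms by auto
  then obtain r where r: "r > 0" "ball x r \<subseteq> S" using assms(1) open_contains_ball by blast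
  have "emeasure lebesgue (ball x r) \<le> emeasure lebesgue S"
    using r assms by (intro emeasure_mono open_lebesgue) auto
  then have "emeasure lborel (ball x r) = 0" using z by simp
  then have "measure lborel (ball x r) = 0" by (simp add: measure_def)
  with content_ball_pos[OF r(1), of x] show False by simp
qed

lemma meas_AE:
  fixes g h :: "'a::euclidean_space \<Rightarrow> real"
  assumes "\<Omega> \<in> sets lebesgue" "g \<in> borel_measurable (lebesgue_on \<Omega>)"
    "AE x in lebesgue. x \<in> \<Omega> \<longrightarrow> g x = h x"
  shows "h \<in> borel_measurable (lebesgue_on \<Omega>)"
proof -
  have "(\<lambda>x. indicator \<Omega> x *\<^sub>R g x) \<in> borel_measurable lebesgue"
    using assms borel_measurable_restrict_space_iff[of \<Omega> lebesgue g] by simp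
  moreover have "AE x in lebesgue. indicator \<Omega> x *\<^sub>R g x = indicator \<Omega> x *\<^sub>R h x"
    using assms(3) by eventually_elim (auto simp: indicator_def)
  ultimately have "(\<lambda>x. indicator \<Omega> x *\<^sub>R h x) \<in> borel_measurable lebesgue"
    by (rule borel_measurable_AE)
  then show ?thesis using assms borel_measurable_restrict_space_iff[of \<Omega> lebesgue h] by simp
qed

lemma Lp_AE:
  assumes "\<Omega> \<in> sets lebesgue" "g \<in> Lp \<Omega> p"
    "AE x in lebesgue. x \<in> \<Omega> \<longrightarrow> g x = h x"
  shows "h \<in> Lp \<Omega> p"
  using assms meas_AE[OF assms(1) _ assms(3)] Lp_int_cong_AE[OF assms(3)] unfolding Lp_def by auto

lemma ip_cong_AE:
  assumes "\<Omega> \<in> sets lebesgue" "g \<in> borel_measurable (lebesgue_on \<Omega>)"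
    "h \<in> borel_measurable (lebesgue_on \<Omega>)" "k \<in> borel_measurable (lebesgue_on \<Omega>)"
    "AE x in lebesgue. x \<in> \<Omega> \<longrightarrow> g x = h x"
  shows "ip \<Omega> g k = ip \<Omega> h k"
proof -
  have m1: "(\<lambda>x. indicator \<Omega> x *\<^sub>R (g x * k x)) \<in> borel_measurable lebesgue"
    using assms borel_measurable_restrict_space_iff[of \<Omega> lebesgue "\<lambda>x. g x * k x"] by simp
  have m2: "(\<lambda>x. indicator \<Omega> x *\<^sub>R (h x * k x)) \<in> borel_measurable lebesgue"
    using assms borel_measurable_restrict_space_iff[of \<Omega> lebesgue "\<lambda>x. h x * k x"] by simp
  have "AE x in lebesgue. indicator \<Omega> x *\<^sub>R (g x * k x) = indicator \<Omega> x *\<^sub>R (h x * k x)"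
    using assms(5) by eventually_elim (auto simp: indicator_def)
  then show ?thesis unfolding ip_def set_lebesgue_integral_def
    by (rule integral_cong_AE[OF m1 m2])
qed

lemma Lpnorm_zero:
  assumes "\<Omega> \<in> sets lebesgue" "g \<in> Lp \<Omega> p" "p > 0" "Lpnorm \<Omega> p g = 0"
  shows "AE x in lebesgue. x \<in> \<Omega> \<longrightarrow> g x = 0"
proof -
  have mg: "g \<in> borel_measurable (lebesgue_on \<Omega>)" and fin: "Lp_int \<Omega> p g < \<infinity>"
    using assms unfolding Lp_def by auto
  have "enn2real (Lp_int \<Omega> p g) = 0" using assms(4) unfolding Lpnorm_def by simp
  then have "Lp_int \<Omega> p g = 0" using fin by (auto simp: enn2real_eq_0_iff)
  then have "AE x in lebesgue. ennreal (\<bar>indicator \<Omega> x * g x\<bar> powr p) = 0"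
    unfolding Lp_int_alt using nn_integral_0_iff_AE[OF meas_Lp_int[OF assms(1) mg]] by simp
  then show ?thesis by eventually_elim (auto simp: indicator_def split: if_splits)
qed

lemma cont_AE_eq:
  fixes u v :: "'a::euclidean_space \<Rightarrow> real"
  assumes "open \<Omega>" "continuous_on \<Omega> u" "continuous_on \<Omega> v"
    "AE x in lebesgue. x \<in> \<Omega> \<longrightarrow> u x = v x"
  shows "\<forall>x\<in>\<Omega>. u x = v x"
proof (rule ccontr)
  assume "\<not> ?thesis"
  then obtain x where x: "x \<in> \<Omega>" "u x \<noteq> v x" by auto
  define S where "S = \<Omega> \<inter> (\<lambda>y. u y - v y) -` (- {0})"
  have oS: "open S" unfolding S_def
    by (intro continuous_open_preimage continuous_on_diff assms) auto
  have "x \<in> S" using x unfolding S_def by auto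
  then have "emeasure lebesgue S \<noteq> 0" using open_pos_measure[OF oS] by auto
  moreover have "AE y in lebesgue. y \<notin> S"
    using assms(4) by eventually_elim (auto simp: S_def)
  then have "emeasure lebesgue S = 0"
    using AE_iff_measurable[OF open_lebesgue[OF oS], of "\<lambda>y. y \<notin> S"] by auto
  ultimately show False by simp
qed

lemma Lp_int_eq:
  assumes "g \<in> Lp \<Omega> p" "p > 0"
  shows "Lp_int \<Omega> p g = ennreal (Lpnorm \<Omega> p g powr p)"
proof -
  have "Lp_int \<Omega> p g < \<infinity>" using assms unfolding Lp_def by auto
  then show ?thesis unfolding Lpnorm_def using assms(2) by (simp add: powr_powr)
qed

lemma Lp_abs:
  assumes "g \<in> Lp \<Omega> p" "p \<ge> 0"
  shows "(\<lambda>x. \<bar>g x\<bar>) \<in> Lp \<Omega> p"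
  using assms by (intro Lp_dom[OF _ assms(1)]) (auto simp: Lp_def)

lemma set_integral_AE_zero:
  fixes g w :: "'a::euclidean_space \<Rightarrow> real"
  assumes "AE x in lebesgue. x \<in> \<Omega> \<longrightarrow> g x = 0"
  shows "(LINT x:\<Omega>|lebesgue. g x * w x) = 0"
  unfolding set_lebesgue_integral_def
  by (rule integral_eq_zero_AE) (use assms in \<open>eventually_elim, auto simp: indicator_def\<close>)

lemma pos_functional_bounded:
  fixes \<Omega> :: "(real^'n) set" and w :: "real^'n \<Rightarrow> real"
  assumes \<Omega>: "\<Omega> \<in> sets lebesgue" and p: "p \<ge> 1"
    and wnn: "AE x in lebesgue. x \<in> \<Omega> \<longrightarrow> w x \<ge> 0"
    and int: "\<forall>g\<in>Lp \<Omega> p. set_integrable lebesgue \<Omega> (\<lambda>x. g x * w x)"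
  shows "\<exists>C. \<forall>g\<in>Lp \<Omega> p. (LINT x:\<Omega>|lebesgue. \<bar>g x\<bar> * w x) \<le> C * Lpnorm \<Omega> p g"
proof (rule ccontr)
  assume "\<not> ?thesis"
  then have "\<forall>k::nat. \<exists>g. g \<in> Lp \<Omega> p \<and> (LINT x:\<Omega>|lebesgue. \<bar>g x\<bar> * w x) > 4 ^ k * Lpnorm \<Omega> p g"
    by (meson not_le)
  then obtain gs where gs: "\<And>k. gs k \<in> Lp \<Omega> p"
    "\<And>k. (LINT x:\<Omega>|lebesgue. \<bar>gs k x\<bar> * w x) > 4 ^ k * Lpnorm \<Omega> p (gs k)"
    by metis
  have p0: "p > 0" using p by simp
  define N where "N k = Lpnorm \<Omega> p (gs k)" for k
  have Npos: "N k > 0" for k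
  proof (rule ccontr)
    assume "\<not> N k > 0"
    then have "N k = 0" using Lpnorm_nonneg[of \<Omega> p "gs k"] unfolding N_def by linarith
    then have "AE x in lebesgue. x \<in> \<Omega> \<longrightarrow> gs k x = 0"
      using Lpnorm_zero[OF \<Omega> gs(1) p0] unfolding N_def by blast
    then have "AE x in lebesgue. x \<in> \<Omega> \<longrightarrow> \<bar>gs k x\<bar> = 0" by eventually_elim auto
    from set_integral_AE_zero[OF this, of w] gs(2)[of k] \<open>N k = 0\<close> show False
      unfolding N_def by simp
  qed
  have mgs: "gs k \<in> borel_measurable (lebesgue_on \<Omega>)" for k using gs(1) unfolding Lp_def by auto
  define c :: "nat \<Rightarrow> real" where "c k = (1/2) ^ k" for k
  have c0: "c k > 0" for k unfolding c_def by simp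
  define b where "b k x = inverse (N k) * \<bar>indicator \<Omega> x * gs k x\<bar>" for k x
  have b_nn: "b k x \<ge> 0" for k x unfolding b_def using Npos[of k] by simp
  have mb: "b k \<in> borel_measurable lebesgue" for k
    unfolding b_def using meas_ind[OF \<Omega> mgs] by measurable
  have bOm: "x \<in> \<Omega> \<Longrightarrow> b k x = inverse (N k) * \<bar>gs k x\<bar>" for k x unfolding b_def by simp
  have cbLp: "(\<lambda>x. c k * b k x) \<in> Lp \<Omega> p" for k
  proof -
    have "(\<lambda>x. (c k * inverse (N k)) * \<bar>gs k x\<bar>) \<in> Lp \<Omega> p"
      by (intro Lp_scale[OF \<Omega> _ p0] Lp_abs gs(1)) (use p0 in simp)
    moreover have "AE x in lebesgue. x \<in> \<Omega> \<longrightarrow> (c k * inverse (N k)) * \<bar>gs k x\<bar> = c k * b k x"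
      using bOm by auto
    ultimately show ?thesis by (rule Lp_AE[OF \<Omega>])
  qed
  have cbint: "(\<integral>\<^sup>+ x. ennreal (indicator \<Omega> x * (c k * b k x) powr p) \<partial>lebesgue) = ennreal (c k powr p)" for k
  proof -
    have "(\<integral>\<^sup>+ x. ennreal (indicator \<Omega> x * (c k * b k x) powr p) \<partial>lebesgue)
        = Lp_int \<Omega> p (\<lambda>x. (c k * inverse (N k)) * gs k x)"
      unfolding Lp_int_def using Npos[of k]
      by (intro nn_integral_cong) (auto simp: indicator_def b_def abs_mult c_def mult.assoc)
    also have "\<dots> = ennreal (\<bar>c k * inverse (N k)\<bar> powr p) * ennreal (N k powr p)"
      unfolding Lp_int_scale[OF \<Omega> mgs p0] Lp_int_eq[OF gs(1) p0] N_def by simp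
    also have "\<dots> = ennreal (c k powr p)"
      using c0[of k] Npos[of k]
      by (simp add: ennreal_mult'[symmetric] powr_mult[symmetric] abs_mult mult.assoc)
    finally show ?thesis .
  qed
  define S where "S x = (\<Sum>k. ennreal ((c k * b k x) powr p))" for x
  define G where "G x = enn2real (SUP k. ennreal (c k * b k x))" for x
  have mG: "G \<in> borel_measurable lebesgue" unfolding G_def using mb by measurable
  have G_nn: "G x \<ge> 0" for x unfolding G_def by simp
  have key: "(\<forall>k. c k * b k x \<le> G x) \<and> ennreal (G x powr p) \<le> S x" if fin: "S x < \<infinity>" for x
  proof -
    define s where "s = enn2real (S x)"
    have s: "s \<ge> 0" "S x = ennreal s" using fin unfolding s_def by auto
    have trm: "ennreal ((c k * b k x) powr p) \<le> S x" for k
    proof -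
      have "(\<Sum>i\<in>{k}. ennreal ((c i * b i x) powr p)) \<le> (\<Sum>i. ennreal ((c i * b i x) powr p))"
        by (rule sum_le_suminf) (simp_all add: summableI)
      then show ?thesis unfolding S_def by simp
    qed
    have bd: "c k * b k x \<le> s powr (1/p)" for k
    proof -
      have "(c k * b k x) powr p \<le> s" using trm[of k] s by simp
      then have "((c k * b k x) powr p) powr (1/p) \<le> s powr (1/p)"
        by (intro powr_mono2) (use p0 in auto)
      then show ?thesis using p0 c0[of k] b_nn[of k x] by (simp add: powr_powr)
    qed
    have sup_le: "(SUP k. ennreal (c k * b k x)) \<le> ennreal (s powr (1/p))"
      using bd by (intro SUP_least ennreal_leI) auto
    have suplt: "(SUP k. ennreal (c k * b k x)) < \<infinity>"
      by (rule le_less_trans[OF sup_le]) simp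
    then have eG: "ennreal (G x) = (SUP k. ennreal (c k * b k x))" unfolding G_def by simp
    have 1: "c k * b k x \<le> G x" for k
    proof -
      have "ennreal (c k * b k x) \<le> ennreal (G x)" unfolding eG by (rule SUP_upper) simp
      then show ?thesis using G_nn by (simp add: ennreal_le_iff)
    qed
    have "ennreal (G x) \<le> ennreal (s powr (1/p))" using eG sup_le by simp
    then have "G x \<le> s powr (1/p)" by (simp add: ennreal_le_iff)
    then have "G x powr p \<le> (s powr (1/p)) powr p" by (intro powr_mono2) (use p0 G_nn in auto)
    also have "\<dots> = s" using p0 s by (simp add: powr_powr)
    finally have "ennreal (G x powr p) \<le> ennreal s" by (rule ennreal_leI)
    then show ?thesis using 1 s(2) by simp
  qed
  have mterm: "(\<lambda>x. ennreal ((c k * b k x) powr p)) \<in> borel_measurable lebesgue" for k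
    using mb[of k] by measurable
  have mterm2: "(\<lambda>x. ennreal (indicator \<Omega> x * (c k * b k x) powr p)) \<in> borel_measurable lebesgue" for k
    using mb[of k] \<Omega> by measurable
  have mS0: "S \<in> borel_measurable lebesgue" unfolding S_def
    by (rule borel_measurable_suminf_order) (rule mterm)
  have mS: "(\<lambda>x. ennreal (indicator \<Omega> x) * S x) \<in> borel_measurable lebesgue"
    by (rule borel_measurable_times_ennreal[OF measurable_compose[OF borel_measurable_indicator[OF \<Omega>] measurable_ennreal] mS0])
  have T: "(\<integral>\<^sup>+ x. ennreal (indicator \<Omega> x) * S x \<partial>lebesgue) = (\<Sum>k. ennreal (c k powr p))"
  proof -
    have "(\<integral>\<^sup>+ x. ennreal (indicator \<Omega> x) * S x \<partial>lebesgue)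
       = (\<integral>\<^sup>+ x. (\<Sum>k. ennreal (indicator \<Omega> x * (c k * b k x) powr p)) \<partial>lebesgue)"
    proof (intro nn_integral_cong)
      fix x
      show "ennreal (indicator \<Omega> x) * S x = (\<Sum>k. ennreal (indicator \<Omega> x * (c k * b k x) powr p))"
      proof (cases "x \<in> \<Omega>")
        case True
        then show ?thesis unfolding S_def by simp
      next
        case False
        then show ?thesis by simp
      qed
    qed
    also have "\<dots> = (\<Sum>k. (\<integral>\<^sup>+ x. ennreal (indicator \<Omega> x * (c k * b k x) powr p) \<partial>lebesgue))"
      by (rule nn_integral_suminf) (rule mterm2)
    finally show ?thesis using cbint by simp
  qed
  have "(\<Sum>k. ennreal (c k powr p)) \<le> (\<Sum>k. ennreal ((1/2) ^ k))"
  proof (rule suminf_le)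
    show "summable (\<lambda>k. ennreal (c k powr p))" by (rule summableI)
    show "summable (\<lambda>k. ennreal ((1/2::real) ^ k))" by (rule summableI)
    fix k
    show "ennreal (c k powr p) \<le> ennreal ((1/2) ^ k)"
    proof (rule ennreal_leI)
    have "c k powr p \<le> c k powr 1" unfolding c_def
      by (rule powr_mono') (use p in \<open>auto intro: power_le_one\<close>)
    then show "c k powr p \<le> (1/2) ^ k" using c0[of k] unfolding c_def by simp
    qed
  qed
  also have "\<dots> = ennreal (\<Sum>k. (1/2::real) ^ k)"
    by (rule suminf_ennreal2) (auto intro: summable_geometric)
  also have "(\<Sum>k. (1/2::real) ^ k) = 2"
    using suminf_geometric[of "1/2::real"] by simp
  finally have Tfin: "(\<integral>\<^sup>+ x. ennreal (indicator \<Omega> x) * S x \<partial>lebesgue) \<noteq> \<infinity>"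
    using T by (auto simp: top_unique)
  have AEfin: "AE x in lebesgue. x \<in> \<Omega> \<longrightarrow> S x < \<infinity>"
    using nn_integral_PInf_AE[OF mS Tfin] by eventually_elim (auto simp: indicator_def top.not_eq_extremum)
  have "Lp_int \<Omega> p G \<le> (\<integral>\<^sup>+ x. ennreal (indicator \<Omega> x) * S x \<partial>lebesgue)"
    unfolding Lp_int_def
  proof (intro nn_integral_mono_AE)
    show "AE x in lebesgue. ennreal (indicator \<Omega> x * \<bar>G x\<bar> powr p) \<le> ennreal (indicator \<Omega> x) * S x"
      using AEfin
    proof eventually_elim
      case (elim x)
      show ?case
      proof (cases "x \<in> \<Omega>")
        case True
        then show ?thesis using key[of x] elim G_nn[of x] by simp
      qed simp
    qed
  qed
  then have "Lp_int \<Omega> p G < \<infinity>" using Tfin by (simp add: le_less_trans top.not_eq_extremum)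
  moreover have "G \<in> borel_measurable (lebesgue_on \<Omega>)" using mG by (rule measurable_restrict_space1)
  ultimately have GLp: "G \<in> Lp \<Omega> p" unfolding Lp_def by simp
  have wnn': "AE x in lebesgue. x \<in> \<Omega> \<longrightarrow> c k * b k x * w x \<le> G x * w x" for k
    using AEfin wnn by eventually_elim (use key in \<open>auto intro: mult_right_mono\<close>)
  have bound: "2 ^ k < (LINT x:\<Omega>|lebesgue. G x * w x)" for k
  proof -
    have "(LINT x:\<Omega>|lebesgue. c k * b k x * w x) = (LINT x:\<Omega>|lebesgue. (c k * inverse (N k)) * (\<bar>gs k x\<bar> * w x))"
      by (rule set_lebesgue_integral_cong[OF \<Omega>]) (auto simp: bOm)
    also have "\<dots> = (c k * inverse (N k)) * (LINT x:\<Omega>|lebesgue. \<bar>gs k x\<bar> * w x)"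
      by (rule set_integral_mult_right)
    also have "\<dots> > (c k * inverse (N k)) * (4 ^ k * N k)"
      using gs(2)[of k] c0[of k] Npos[of k] unfolding N_def by (intro mult_strict_left_mono) auto
    also have "(c k * inverse (N k)) * (4 ^ k * N k) = 2 ^ k"
      using Npos[of k] unfolding c_def by (simp add: field_simps power_mult_distrib[symmetric])
    finally have "2 ^ k < (LINT x:\<Omega>|lebesgue. c k * b k x * w x)" .
    also have "\<dots> \<le> (LINT x:\<Omega>|lebesgue. G x * w x)"
      using int cbLp[of k] GLp wnn'[of k] by (intro set_integral_mono_AE) auto
    finally show ?thesis .
  qed
  obtain k where "(LINT x:\<Omega>|lebesgue. G x * w x) < 2 ^ k"
    using real_arch_pow[of "2::real"] by auto
  with bound[of k] show False by simp
qed

lemma Lp_const: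
  assumes "\<Omega> \<in> sets lebesgue" "emeasure lebesgue \<Omega> < \<infinity>"
  shows "(\<lambda>x. k) \<in> Lp \<Omega> p"
proof -
  have "Lp_int \<Omega> p (\<lambda>x. k) = (\<integral>\<^sup>+ x. ennreal (\<bar>k\<bar> powr p) * indicator \<Omega> x \<partial>lebesgue)"
    unfolding Lp_int_def by (intro nn_integral_cong) (auto simp: indicator_def)
  also have "\<dots> = ennreal (\<bar>k\<bar> powr p) * emeasure lebesgue \<Omega>"
    by (rule nn_integral_cmult_indicator[OF assms(1)])
  finally show ?thesis using assms unfolding Lp_def by (simp add: ennreal_mult_less_top)
qed

lemma Lp_diff:
  assumes "\<Omega> \<in> sets lebesgue" "g \<in> Lp \<Omega> p" "h \<in> Lp \<Omega> p" "p > 0"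
  shows "(\<lambda>x. g x - h x) \<in> Lp \<Omega> p"
  using Lp_add[OF assms(1,2) Lp_scale[OF assms(1,3,4), of "-1"] assms(4)] by simp

lemma Lpnorm_zero_fun: "Lpnorm \<Omega> p (\<lambda>x. 0) = 0"
  unfolding Lpnorm_def Lp_int_def by simp

lemma ip_mono:
  assumes "set_integrable lebesgue \<Omega> (\<lambda>x. g x * w x)" "set_integrable lebesgue \<Omega> (\<lambda>x. h x * w x)"
    "AE x in lebesgue. x \<in> \<Omega> \<longrightarrow> g x \<le> h x" "AE x in lebesgue. x \<in> \<Omega> \<longrightarrow> w x \<ge> 0"
  shows "ip \<Omega> g w \<le> ip \<Omega> h w"
  unfolding ip_def
  by (rule set_integral_mono_AE[OF assms(1,2)]) (use assms(3,4) in \<open>eventually_elim, auto intro: mult_right_mono\<close>)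

lemma ip_scale: "ip \<Omega> (\<lambda>x. a * g x) w = a * ip \<Omega> g w"
  unfolding ip_def by (simp add: mult.assoc)

lemma ip_add:
  assumes "set_integrable lebesgue \<Omega> (\<lambda>x. g x * w x)" "set_integrable lebesgue \<Omega> (\<lambda>x. h x * w x)"
  shows "ip \<Omega> (\<lambda>x. g x + h x) w = ip \<Omega> g w + ip \<Omega> h w"
proof -
  have "ip \<Omega> (\<lambda>x. g x + h x) w = (LINT x:\<Omega>|lebesgue. g x * w x + h x * w x)"
    unfolding ip_def by (simp add: distrib_right)
  also have "\<dots> = ip \<Omega> g w + ip \<Omega> h w"
    unfolding ip_def by (rule set_integral_add(2)[OF assms])
  finally show ?thesis .
qed

lemma ip_diff:
  assumes "set_integrable lebesgue \<Omega> (\<lambda>x. g x * w x)" "set_integrable lebesgue \<Omega> (\<lambda>x. h x * w x)"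
  shows "ip \<Omega> (\<lambda>x. g x - h x) w = ip \<Omega> g w - ip \<Omega> h w"
proof -
  have "ip \<Omega> (\<lambda>x. g x - h x) w = (LINT x:\<Omega>|lebesgue. g x * w x - h x * w x)"
    unfolding ip_def by (simp add: left_diff_distrib)
  also have "\<dots> = ip \<Omega> g w - ip \<Omega> h w"
    unfolding ip_def by (rule set_integral_diff(2)[OF assms])
  finally show ?thesis .
qed

lemma alg1:
  fixes a b c z t w :: real
  assumes "a - b * w + c * w = z + t * w"
  shows "a = z + (t - c + b) * w"
proof -
  have "(t - c + b) * w = t * w - c * w + b * w" by (simp add: ring_distribs)
  then show ?thesis using assms by linarith
qed

theorem proposition2p11:
  fixes \<Omega> :: "(real^'n) set"
    and A :: "real^'n \<Rightarrow> real^'n^'n" and bb :: "real^'n \<Rightarrow> real^'n" and c :: "real^'n \<Rightarrow> real"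
    and lam Lam p b B :: real and f :: "real \<Rightarrow> real"
    and \<phi>1 \<phi>1s :: "real^'n \<Rightarrow> real"
  assumes dom: "C11_domain \<Omega>"
    and ell: "0 < lam" "lam \<le> Lam"
    and A_cont: "continuous_on (closure \<Omega>) A"
    and A_sym: "\<forall>x\<in>closure \<Omega>. transpose (A x) = A x"
    and A_eig: "\<forall>x\<in>closure \<Omega>. \<forall>\<mu> v. v \<noteq> 0 \<and> A x *v v = \<mu> *\<^sub>R v \<longrightarrow> lam \<le> \<mu> \<and> \<mu> \<le> Lam"
    and bb_meas: "bb \<in> borel_measurable (lebesgue_on \<Omega>)"
    and bb_bd: "\<forall>x\<in>\<Omega>. norm (bb x) \<le> Lam"
    and c_meas: "c \<in> borel_measurable (lebesgue_on \<Omega>)"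
    and c_bd: "\<forall>x\<in>\<Omega>. \<bar>c x\<bar> \<le> Lam"
    and p_ge: "p \<ge> real CARD('n)"
    and phi1: "\<phi>1 \<in> Xsp \<Omega> p" "\<forall>x\<in>\<Omega>. \<phi>1 x > 0"
      "ae_eq \<Omega> (\<lambda>x. - Lop \<Omega> A bb c \<phi>1 x) (\<lambda>x. lambda1 \<Omega> A bb c * \<phi>1 x)"
    and phi1s: "\<phi>1s \<in> borel_measurable (lebesgue_on \<Omega>)"
      "AE x in lebesgue. x \<in> \<Omega> \<longrightarrow> \<phi>1s x > 0"
      "\<forall>g\<in>Lp \<Omega> p. set_integrable lebesgue \<Omega> (\<lambda>x. g x * \<phi>1s x)"
      "\<forall>v\<in>Xsp \<Omega> p. ip \<Omega> (\<lambda>x. Lop \<Omega> A bb c v x + lambda1 \<Omega> A bb c * v x) \<phi>1s = 0"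
    and lam1_pos: "0 < lambda1 \<Omega> A bb c"
    and B_gt: "lambda1 \<Omega> A bb c < B"
    and B_prop: "\<forall>b' f'. lambda1 \<Omega> A bb c < b' \<and> b' < B \<and> AP f' b' \<longrightarrow>
                   bilip_homeo \<Omega> p A bb c f' \<phi>1 \<phi>1s"
    and f_lip: "\<exists>K. \<forall>x y. \<bar>f x - f y\<bar> \<le> K * \<bar>x - y\<bar>"
    and f_AP: "AP f b"
    and b_range: "lambda1 \<Omega> A bb c < b" "b < B"
  shows
    "(\<exists>K. \<forall>z\<in>Zsp \<Omega> p \<phi>1s. \<forall>t s.
        Xnorm \<Omega> p (\<lambda>x. Psi_inv \<Omega> p A bb c f \<phi>1 \<phi>1s (\<lambda>y. z y + t * \<phi>1 y) x
                      - Psi_inv \<Omega> p A bb c f \<phi>1 \<phi>1s (\<lambda>y. z y + s * \<phi>1 y) x)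
          \<le> K * \<bar>t - s\<bar>)
     \<and> (\<exists>K. \<forall>z\<in>Zsp \<Omega> p \<phi>1s. \<forall>z'\<in>Zsp \<Omega> p \<phi>1s. \<forall>t t'.
        \<bar>htilde \<Omega> p A bb c f \<phi>1 \<phi>1s z t - htilde \<Omega> p A bb c f \<phi>1 \<phi>1s z' t'\<bar>
          \<le> K * (Lpnorm \<Omega> p (\<lambda>x. z x - z' x) + \<bar>t - t'\<bar>))
     \<and> (\<forall>zg\<in>Zsp \<Omega> p \<phi>1s. \<forall>tg.
        \<exists>h. bij_betw h
          {u \<in> Xsp \<Omega> p. ae_eq \<Omega> (Fop \<Omega> A bb c f u) (\<lambda>x. zg x + tg * \<phi>1 x)}
          {t. htilde \<Omega> p A bb c f \<phi>1 \<phi>1s zg t = tg})"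

proof -
  let ?X = "Xsp \<Omega> p" and ?Z = "Zsp \<Omega> p \<phi>1s"
  let ?Ps = "Psi \<Omega> A bb c f \<phi>1 \<phi>1s"
  let ?Pinv = "Psi_inv \<Omega> p A bb c f \<phi>1 \<phi>1s"
  let ?F = "Fop \<Omega> A bb c f"
  let ?l1 = "lambda1 \<Omega> A bb c"
  let ?D = "ip \<Omega> \<phi>1 \<phi>1s"
  let ?h = "htilde \<Omega> p A bb c f \<phi>1 \<phi>1s"
  let ?coef = "coef \<Omega> \<phi>1 \<phi>1s"
  have \<Omega>o: "open \<Omega>" and \<Omega>b: "bounded \<Omega>" and \<Omega>ne: "\<Omega> \<noteq> {}"
    using dom unfolding C11_domain_def by auto
  have \<Omega>L: "\<Omega> \<in> sets lebesgue" using open_lebesgue[OF \<Omega>o] .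
  have \<Omega>fin: "emeasure lebesgue \<Omega> < \<infinity>"
    using emeasure_bounded_finite[OF \<Omega>b] borel_open[OF \<Omega>o] by simp
  have "CARD('n) \<ge> 1" using zero_less_card_finite[where 'a='n] by linarith
  then have p1: "p \<ge> 1" using p_ge by linarith
  have p0: "p > 0" using p1 by simp
  have bh: "bilip_homeo \<Omega> p A bb c f \<phi>1 \<phi>1s"
    using B_prop[rule_format, OF conjI[OF b_range(1) conjI[OF b_range(2) f_AP]]] .
  note bh' = bh[unfolded bilip_homeo_def]
  have lowex: "\<exists>c0>0. \<forall>u\<in>?X. \<forall>v\<in>?X. Lpnorm \<Omega> p (\<lambda>x. ?Ps u x - ?Ps v x) \<ge> c0 * Xnorm \<Omega> p (\<lambda>x. u x - v x)"
    by (rule conjunct1[OF conjunct2[OF conjunct2[OF bh']]])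
  have surj: "\<forall>g\<in>Lp \<Omega> p. \<exists>u\<in>?X. ae_eq \<Omega> (?Ps u) g"
    by (rule conjunct2[OF conjunct2[OF conjunct2[OF bh']]])
  obtain c0 where c0l: "c0 > 0 \<and> (\<forall>u\<in>?X. \<forall>v\<in>?X. Lpnorm \<Omega> p (\<lambda>x. ?Ps u x - ?Ps v x) \<ge> c0 * Xnorm \<Omega> p (\<lambda>x. u x - v x))"
    using lowex by (rule exE)
  have c0: "c0 > 0" using c0l by (rule conjunct1)
  have low: "\<forall>u\<in>?X. \<forall>v\<in>?X. Lpnorm \<Omega> p (\<lambda>x. ?Ps u x - ?Ps v x) \<ge> c0 * Xnorm \<Omega> p (\<lambda>x. u x - v x)"
    using c0l by (rule conjunct2)
  have Xprops: "u \<in> W2p \<Omega> p \<and> continuous_on (closure \<Omega>) u \<and> (\<forall>x. x \<notin> \<Omega> \<longrightarrow> u x = 0)"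
    if "u \<in> ?X" for u using that unfolding Xsp_def by (rule CollectD)
  have XLp: "u \<in> Lp \<Omega> p" if "u \<in> ?X" for u
    using conjunct1[OF Xprops[OF that]] unfolding W2p_def mem_Collect_eq by blast
  have Xnorm_ge: "Lpnorm \<Omega> p w \<le> Xnorm \<Omega> p w" for w
  proof -
    have a: "0 \<le> (\<Sum>i\<in>UNIV. Lpnorm \<Omega> p (wd1 \<Omega> w i))" by (rule sum_nonneg) (rule Lpnorm_nonneg)
    have b: "0 \<le> (\<Sum>i\<in>UNIV. \<Sum>j\<in>UNIV. Lpnorm \<Omega> p (wd2 \<Omega> w i j))" by (intro sum_nonneg) (rule Lpnorm_nonneg)
    show ?thesis unfolding Xnorm_def using a b by linarith
  qed
  have Xbound: "Xnorm \<Omega> p (\<lambda>x. u x - v x) \<le> Lpnorm \<Omega> p (\<lambda>x. ?Ps u x - ?Ps v x) / c0"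
    if "u \<in> ?X" "v \<in> ?X" for u v
  proof -
    have "c0 * Xnorm \<Omega> p (\<lambda>x. u x - v x) \<le> Lpnorm \<Omega> p (\<lambda>x. ?Ps u x - ?Ps v x)"
      using bspec[OF bspec[OF low that(1)] that(2)] .
    then show ?thesis using c0 by (simp add: pos_le_divide_eq mult.commute)
  qed
  have lowL: "Lpnorm \<Omega> p (\<lambda>x. u x - v x) \<le> Lpnorm \<Omega> p (\<lambda>x. ?Ps u x - ?Ps v x) / c0"
    if "u \<in> ?X" "v \<in> ?X" for u v
    using Xbound[OF that] Xnorm_ge[of "\<lambda>x. u x - v x"] by linarith
  have uniq: "u = v" if "u \<in> ?X" "v \<in> ?X" "ae_eq \<Omega> (?Ps u) g" "ae_eq \<Omega> (?Ps v) g" for u v g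
  proof -
    have ae: "AE x in lebesgue. x \<in> \<Omega> \<longrightarrow> ?Ps u x - ?Ps v x = 0"
      using that(3,4) unfolding ae_eq_def by eventually_elim auto
    have "Lpnorm \<Omega> p (\<lambda>x. ?Ps u x - ?Ps v x) = Lpnorm \<Omega> p (\<lambda>x. 0)"
      by (rule Lpnorm_cong_AE[OF ae])
    then have "Lpnorm \<Omega> p (\<lambda>x. ?Ps u x - ?Ps v x) = 0" by (simp add: Lpnorm_zero_fun)
    then have "Lpnorm \<Omega> p (\<lambda>x. u x - v x) \<le> 0" using lowL[OF that(1,2)] by simp
    then have z: "Lpnorm \<Omega> p (\<lambda>x. u x - v x) = 0" using Lpnorm_nonneg[of \<Omega> p "\<lambda>x. u x - v x"] by linarith
    have "AE x in lebesgue. x \<in> \<Omega> \<longrightarrow> u x - v x = 0"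
      by (rule Lpnorm_zero[OF \<Omega>L Lp_diff[OF \<Omega>L XLp[OF that(1)] XLp[OF that(2)] p0] p0 z])
    then have ae2: "AE x in lebesgue. x \<in> \<Omega> \<longrightarrow> u x = v x" by eventually_elim auto
    have cu: "continuous_on \<Omega> u"
      by (rule continuous_on_subset[OF conjunct1[OF conjunct2[OF Xprops[OF that(1)]]] closure_subset])
    have cv: "continuous_on \<Omega> v"
      by (rule continuous_on_subset[OF conjunct1[OF conjunct2[OF Xprops[OF that(2)]]] closure_subset])
    have in\<Omega>: "\<forall>x\<in>\<Omega>. u x = v x" by (rule cont_AE_eq[OF \<Omega>o cu cv ae2])
    have out: "\<forall>x. x \<notin> \<Omega> \<longrightarrow> u x = 0 \<and> v x = 0" using Xprops[OF that(1)] Xprops[OF that(2)] by blast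
    show ?thesis
    proof
      fix x show "u x = v x" using in\<Omega> out by (cases "x \<in> \<Omega>") auto
    qed
  qed
  have ex: "?Pinv g \<in> ?X \<and> ae_eq \<Omega> (?Ps (?Pinv g)) g" if "g \<in> Lp \<Omega> p" for g
  proof -
    have "\<exists>u\<in>?X. ae_eq \<Omega> (?Ps u) g" by (rule bspec[OF surj that])
    then obtain u where u: "u \<in> ?X" "ae_eq \<Omega> (?Ps u) g" by (rule bexE)
    have "?Pinv g = u" unfolding Psi_inv_def
    proof (rule the_equality)
      show "u \<in> ?X \<and> ae_eq \<Omega> (?Ps u) g" using u by simp
      fix v assume v: "v \<in> ?X \<and> ae_eq \<Omega> (?Ps v) g"
      show "v = u" by (rule uniq[OF conjunct1[OF v] u(1) conjunct2[OF v] u(2)])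
    qed
    then show ?thesis using u by simp
  qed
  have \<phi>X: "\<phi>1 \<in> ?X" using phi1(1) .
  have \<phi>L: "\<phi>1 \<in> Lp \<Omega> p" using XLp[OF \<phi>X] .
  have m\<phi>: "\<phi>1 \<in> borel_measurable (lebesgue_on \<Omega>)" using \<phi>L unfolding Lp_def by auto
  have m\<phi>s: "\<phi>1s \<in> borel_measurable (lebesgue_on \<Omega>)" using phi1s(1) .
  have \<phi>snn: "AE x in lebesgue. x \<in> \<Omega> \<longrightarrow> \<phi>1s x \<ge> 0" using phi1s(2) by eventually_elim auto
  have intg: "set_integrable lebesgue \<Omega> (\<lambda>x. g x * \<phi>1s x)" if "g \<in> Lp \<Omega> p" for g
    by (rule bspec[OF phi1s(3) that])
  have ZLp: "z \<in> Lp \<Omega> p" and Z0: "ip \<Omega> z \<phi>1s = 0" if "z \<in> ?Z" for z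
    using that unfolding Zsp_def by auto
  have ztL: "(\<lambda>x. z x + t * \<phi>1 x) \<in> Lp \<Omega> p" if "z \<in> ?Z" for z t
    by (rule Lp_add[OF \<Omega>L ZLp[OF that] Lp_scale[OF \<Omega>L \<phi>L p0] p0])
  have ipzt: "ip \<Omega> (\<lambda>x. z x + s * \<phi>1 x) \<phi>1s = s * ?D" if "z \<in> ?Z" for z s
  proof -
    have "ip \<Omega> (\<lambda>x. z x + s * \<phi>1 x) \<phi>1s = ip \<Omega> z \<phi>1s + ip \<Omega> (\<lambda>x. s * \<phi>1 x) \<phi>1s"
      by (rule ip_add[OF intg[OF ZLp[OF that]] intg[OF Lp_scale[OF \<Omega>L \<phi>L p0]]])
    then show ?thesis using Z0[OF that] ip_scale[of \<Omega> s \<phi>1 \<phi>1s] by simp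
  qed
  have Dpos: "?D > 0"
  proof -
    have int: "integrable lebesgue (\<lambda>x. indicator \<Omega> x *\<^sub>R (\<phi>1 x * \<phi>1s x))"
      using intg[OF \<phi>L] unfolding set_integrable_def .
    have nn: "AE x in lebesgue. 0 \<le> indicator \<Omega> x *\<^sub>R (\<phi>1 x * \<phi>1s x)"
      using \<phi>snn by eventually_elim (use phi1(2) in \<open>auto simp: indicator_def\<close>)
    have ge: "?D \<ge> 0" unfolding ip_def set_lebesgue_integral_def using nn by (rule integral_nonneg_AE)
    have "?D \<noteq> 0"
    proof
      assume "?D = 0"
      then have "AE x in lebesgue. indicator \<Omega> x *\<^sub>R (\<phi>1 x * \<phi>1s x) = 0"
        using integral_nonneg_eq_0_iff_AE[OF int nn] unfolding ip_def set_lebesgue_integral_def by simp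
      then have "AE x in lebesgue. x \<notin> \<Omega>"
        using phi1s(2) by eventually_elim (use phi1(2) in \<open>auto simp: indicator_def split: if_splits\<close>)
      then have "emeasure lebesgue \<Omega> = 0"
        using AE_iff_measurable[OF \<Omega>L, of "\<lambda>x. x \<notin> \<Omega>"] by auto
      with open_pos_measure[OF \<Omega>o \<Omega>ne] show False by simp
    qed
    with ge show ?thesis by simp
  qed
  obtain Kf0 where Kf0: "\<forall>x y. \<bar>f x - f y\<bar> \<le> Kf0 * \<bar>x - y\<bar>" using f_lip by (rule exE)
  define Kf where "Kf = max Kf0 0"
  have Kf0': "Kf \<ge> 0" unfolding Kf_def by simp
  have flip: "\<bar>f x - f y\<bar> \<le> Kf * \<bar>x - y\<bar>" for x y
  proof -
    have "Kf0 * \<bar>x - y\<bar> \<le> Kf * \<bar>x - y\<bar>" unfolding Kf_def by (intro mult_right_mono) auto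
    then show ?thesis using Kf0 by (meson order_trans)
  qed
  have fcont: "continuous_on UNIV f"
  proof -
    have "lipschitz_on Kf UNIV f"
      by (rule lipschitz_onI) (use flip Kf0' in \<open>auto simp: dist_real_def\<close>)
    then show ?thesis by (rule lipschitz_on_continuous_on)
  qed
  have fLp: "(\<lambda>x. f (u x)) \<in> Lp \<Omega> p" if "u \<in> Lp \<Omega> p" for u
  proof -
    have mu: "u \<in> borel_measurable (lebesgue_on \<Omega>)" using that unfolding Lp_def by auto
    have mf: "(\<lambda>x. f (u x)) \<in> borel_measurable (lebesgue_on \<Omega>)"
      by (rule borel_measurable_continuous_on[OF fcont mu])
    have hL: "(\<lambda>x. \<bar>f 0\<bar> + Kf * \<bar>u x\<bar>) \<in> Lp \<Omega> p"
      by (rule Lp_add[OF \<Omega>L Lp_const[OF \<Omega>L \<Omega>fin] Lp_scale[OF \<Omega>L Lp_abs[OF that] p0] p0]) (use p0 in simp)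
    have bd: "\<bar>f (u x)\<bar> \<le> \<bar>\<bar>f 0\<bar> + Kf * \<bar>u x\<bar>\<bar>" for x
    proof -
      have "\<bar>f (u x) - f 0\<bar> \<le> Kf * \<bar>u x - 0\<bar>" by (rule flip)
      moreover have "0 \<le> Kf * \<bar>u x\<bar>" using Kf0' by simp
      ultimately show ?thesis by simp
    qed
    show ?thesis by (rule Lp_dom[OF mf hL bd]) (use p0 in simp)
  qed
  define U where "U z t = ?Pinv (\<lambda>x. z x + t * \<phi>1 x)" for z t
  have UX: "U z t \<in> ?X" and UPs: "ae_eq \<Omega> (?Ps (U z t)) (\<lambda>x. z x + t * \<phi>1 x)" if "z \<in> ?Z" for z t
    using ex[OF ztL[OF that]] unfolding U_def by auto
  have ULp: "U z t \<in> Lp \<Omega> p" if "z \<in> ?Z" for z t using XLp[OF UX[OF that]] .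
  have psi_eq: "?Ps u x = ?F u x - ?coef (?F u) * \<phi>1 x + ?coef u * \<phi>1 x" for u x
    unfolding Psi_def Pproj_def by simp
  have hdef: "?h z t = ?coef (?F (U z t))" for z t unfolding htilde_def U_def ..
  have central: "?coef (U z t) = t \<and> (AE x in lebesgue. x \<in> \<Omega> \<longrightarrow> ?F (U z t) x = z x + ?h z t * \<phi>1 x)
     \<and> ?F (U z t) \<in> Lp \<Omega> p" if zZ: "z \<in> ?Z" for z t
  proof -
    define u where "u = U z t"
    define s where "s = t - ?coef u + ?coef (?F u)"
    have aeF: "AE x in lebesgue. x \<in> \<Omega> \<longrightarrow> z x + s * \<phi>1 x = ?F u x"
      using UPs[OF zZ, of t] unfolding ae_eq_def u_def[symmetric]
      by eventually_elim (use alg1 in \<open>auto simp: psi_eq s_def\<close>)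
    have mzs: "(\<lambda>x. z x + s * \<phi>1 x) \<in> borel_measurable (lebesgue_on \<Omega>)"
      using ztL[OF zZ, of s] unfolding Lp_def by auto
    have mF: "?F u \<in> borel_measurable (lebesgue_on \<Omega>)" by (rule meas_AE[OF \<Omega>L mzs aeF])
    have FLp: "?F u \<in> Lp \<Omega> p" by (rule Lp_AE[OF \<Omega>L ztL[OF zZ, of s] aeF])
    have aeF': "AE x in lebesgue. x \<in> \<Omega> \<longrightarrow> ?F u x = z x + s * \<phi>1 x"
      using aeF by eventually_elim auto
    have "ip \<Omega> (?F u) \<phi>1s = ip \<Omega> (\<lambda>x. z x + s * \<phi>1 x) \<phi>1s"
      by (rule ip_cong_AE[OF \<Omega>L mF mzs m\<phi>s aeF'])
    then have "ip \<Omega> (?F u) \<phi>1s = s * ?D" using ipzt[OF zZ] by simp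
    then have cF: "?coef (?F u) = s" unfolding coef_def using Dpos by simp
    then have cu: "?coef u = t" unfolding s_def by simp
    have "?h z t = s" using hdef[of z t] cF unfolding u_def by simp
    then show ?thesis using cu aeF' FLp unfolding u_def by simp
  qed
  have hform: "?h z t = ?l1 * t - ip \<Omega> (\<lambda>x. f (U z t x)) \<phi>1s / ?D" if zZ: "z \<in> ?Z" for z t
  proof -
    define u where "u = U z t"
    have uX: "u \<in> ?X" unfolding u_def by (rule UX[OF zZ])
    have uL: "u \<in> Lp \<Omega> p" using XLp[OF uX] .
    have FLp: "?F u \<in> Lp \<Omega> p" using central[OF zZ, of t] unfolding u_def by simp
    have cu: "?coef u = t" using central[OF zZ, of t] unfolding u_def by simp
    have ipu: "ip \<Omega> u \<phi>1s = t * ?D" using cu Dpos unfolding coef_def by (simp add: field_simps)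
    have h1L: "(\<lambda>x. ?l1 * u x - f (u x)) \<in> Lp \<Omega> p"
      by (rule Lp_diff[OF \<Omega>L Lp_scale[OF \<Omega>L uL p0] fLp[OF uL] p0])
    have eqf: "(\<lambda>x. Lop \<Omega> A bb c u x + ?l1 * u x) = (\<lambda>x. (?l1 * u x - f (u x)) - ?F u x)"
      by (rule ext) (simp add: Fop_def)
    have "0 = ip \<Omega> (\<lambda>x. Lop \<Omega> A bb c u x + ?l1 * u x) \<phi>1s" using phi1s(4) uX by simp
    also have "\<dots> = ip \<Omega> (\<lambda>x. ?l1 * u x - f (u x)) \<phi>1s - ip \<Omega> (?F u) \<phi>1s"
      unfolding eqf by (rule ip_diff[OF intg[OF h1L] intg[OF FLp]])
    also have "ip \<Omega> (\<lambda>x. ?l1 * u x - f (u x)) \<phi>1s = ?l1 * ip \<Omega> u \<phi>1s - ip \<Omega> (\<lambda>x. f (u x)) \<phi>1s"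
      using ip_diff[OF intg[OF Lp_scale[OF \<Omega>L uL p0]] intg[OF fLp[OF uL]]] ip_scale[of \<Omega> ?l1 u \<phi>1s]
      by simp
    finally have "ip \<Omega> (?F u) \<phi>1s = ?l1 * (t * ?D) - ip \<Omega> (\<lambda>x. f (u x)) \<phi>1s" using ipu by simp
    then have "?coef (?F u) = ?l1 * t - ip \<Omega> (\<lambda>x. f (u x)) \<phi>1s / ?D"
      unfolding coef_def using Dpos by (simp add: field_simps)
    then show ?thesis using hdef[of z t] unfolding u_def by simp
  qed
  have part1: "Xnorm \<Omega> p (\<lambda>x. U z t x - U z s x) \<le> (Lpnorm \<Omega> p \<phi>1 / c0) * \<bar>t - s\<bar>"
    if zZ: "z \<in> ?Z" for z t s
  proof -
    have ae: "AE x in lebesgue. x \<in> \<Omega> \<longrightarrow> ?Ps (U z t) x - ?Ps (U z s) x = (t - s) * \<phi>1 x"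
      using UPs[OF zZ, of t] UPs[OF zZ, of s] unfolding ae_eq_def
      by eventually_elim (auto simp: algebra_simps)
    have "Lpnorm \<Omega> p (\<lambda>x. ?Ps (U z t) x - ?Ps (U z s) x) = Lpnorm \<Omega> p (\<lambda>x. (t - s) * \<phi>1 x)"
      by (rule Lpnorm_cong_AE[OF ae])
    also have "\<dots> = \<bar>t - s\<bar> * Lpnorm \<Omega> p \<phi>1" by (rule Lpnorm_scale[OF \<Omega>L m\<phi> p0])
    finally have "Xnorm \<Omega> p (\<lambda>x. U z t x - U z s x) \<le> \<bar>t - s\<bar> * Lpnorm \<Omega> p \<phi>1 / c0"
      using Xbound[OF UX[OF zZ, of t] UX[OF zZ, of s]] by simp
    then show ?thesis by (simp add: field_simps)
  qed
  obtain C where C: "\<forall>g\<in>Lp \<Omega> p. (LINT x:\<Omega>|lebesgue. \<bar>g x\<bar> * \<phi>1s x) \<le> C * Lpnorm \<Omega> p g"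
    using pos_functional_bounded[OF \<Omega>L p1 \<phi>snn phi1s(3)] by (rule exE)
  define C' where "C' = max C 0"
  have C'0: "C' \<ge> 0" unfolding C'_def by simp
  have Cb: "ip \<Omega> (\<lambda>x. \<bar>g x\<bar>) \<phi>1s \<le> C' * Lpnorm \<Omega> p g" if "g \<in> Lp \<Omega> p" for g
  proof -
    have "C * Lpnorm \<Omega> p g \<le> C' * Lpnorm \<Omega> p g"
      unfolding C'_def by (intro mult_right_mono Lpnorm_nonneg) simp
    moreover have "(LINT x:\<Omega>|lebesgue. \<bar>g x\<bar> * \<phi>1s x) \<le> C * Lpnorm \<Omega> p g"
      by (rule bspec[OF C that])
    ultimately show ?thesis unfolding ip_def by linarith
  qed
  define M where "M = Kf * C' / (c0 * ?D)"
  have M0: "M \<ge> 0" unfolding M_def using Kf0' C'0 c0 Dpos by simp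
  have gen: "\<bar>?h z t - ?h z' t'\<bar> \<le> ?l1 * \<bar>t - t'\<bar> + M * Lpnorm \<Omega> p (\<lambda>x. (z x + t * \<phi>1 x) - (z' x + t' * \<phi>1 x))"
    if zZ: "z \<in> ?Z" and zZ': "z' \<in> ?Z" for z z' t t'
  proof -
    define u where "u = U z t"
    define u' where "u' = U z' t'"
    have uX: "u \<in> ?X" unfolding u_def by (rule UX[OF zZ])
    have uX': "u' \<in> ?X" unfolding u'_def by (rule UX[OF zZ'])
    have uL: "u \<in> Lp \<Omega> p" using XLp[OF uX] .
    have uL': "u' \<in> Lp \<Omega> p" using XLp[OF uX'] .
    define I where "I = ip \<Omega> (\<lambda>x. f (u x)) \<phi>1s"
    define I' where "I' = ip \<Omega> (\<lambda>x. f (u' x)) \<phi>1s"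
    have dL: "(\<lambda>x. f (u x) - f (u' x)) \<in> Lp \<Omega> p" by (rule Lp_diff[OF \<Omega>L fLp[OF uL] fLp[OF uL'] p0])
    have adL: "(\<lambda>x. \<bar>f (u x) - f (u' x)\<bar>) \<in> Lp \<Omega> p" by (rule Lp_abs[OF dL]) (use p0 in simp)
    have mdL: "(\<lambda>x. -1 * (f (u x) - f (u' x))) \<in> Lp \<Omega> p" by (rule Lp_scale[OF \<Omega>L dL p0])
    have uuL: "(\<lambda>x. u x - u' x) \<in> Lp \<Omega> p" by (rule Lp_diff[OF \<Omega>L uL uL' p0])
    have KuL: "(\<lambda>x. Kf * \<bar>u x - u' x\<bar>) \<in> Lp \<Omega> p"
      by (rule Lp_scale[OF \<Omega>L Lp_abs[OF uuL] p0]) (use p0 in simp)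
    have II: "I - I' = ip \<Omega> (\<lambda>x. f (u x) - f (u' x)) \<phi>1s"
      unfolding I_def I'_def by (rule ip_diff[OF intg[OF fLp[OF uL]] intg[OF fLp[OF uL']], symmetric])
    have a1: "ip \<Omega> (\<lambda>x. f (u x) - f (u' x)) \<phi>1s \<le> ip \<Omega> (\<lambda>x. \<bar>f (u x) - f (u' x)\<bar>) \<phi>1s"
      by (rule ip_mono[OF intg[OF dL] intg[OF adL] _ \<phi>snn]) auto
    have a2: "ip \<Omega> (\<lambda>x. -1 * (f (u x) - f (u' x))) \<phi>1s \<le> ip \<Omega> (\<lambda>x. \<bar>f (u x) - f (u' x)\<bar>) \<phi>1s"
      by (rule ip_mono[OF intg[OF mdL] intg[OF adL] _ \<phi>snn]) auto
    have a2': "ip \<Omega> (\<lambda>x. -1 * (f (u x) - f (u' x))) \<phi>1s = - ip \<Omega> (\<lambda>x. f (u x) - f (u' x)) \<phi>1s"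
      using ip_scale[of \<Omega> "-1" "\<lambda>x. f (u x) - f (u' x)" \<phi>1s] by simp
    have a3: "ip \<Omega> (\<lambda>x. \<bar>f (u x) - f (u' x)\<bar>) \<phi>1s \<le> ip \<Omega> (\<lambda>x. Kf * \<bar>u x - u' x\<bar>) \<phi>1s"
      by (rule ip_mono[OF intg[OF adL] intg[OF KuL] _ \<phi>snn]) (use flip in auto)
    have a4: "ip \<Omega> (\<lambda>x. Kf * \<bar>u x - u' x\<bar>) \<phi>1s = Kf * ip \<Omega> (\<lambda>x. \<bar>u x - u' x\<bar>) \<phi>1s"
      by (rule ip_scale)
    have a5: "ip \<Omega> (\<lambda>x. \<bar>u x - u' x\<bar>) \<phi>1s \<le> C' * Lpnorm \<Omega> p (\<lambda>x. u x - u' x)"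
      by (rule Cb[OF uuL])
    define Lq where "Lq = Lpnorm \<Omega> p (\<lambda>x. (z x + t * \<phi>1 x) - (z' x + t' * \<phi>1 x))"
    have ae: "AE x in lebesgue. x \<in> \<Omega> \<longrightarrow> ?Ps u x - ?Ps u' x = (z x + t * \<phi>1 x) - (z' x + t' * \<phi>1 x)"
      using UPs[OF zZ, of t] UPs[OF zZ', of t'] unfolding ae_eq_def u_def u'_def
      by eventually_elim auto
    have a6: "Lpnorm \<Omega> p (\<lambda>x. u x - u' x) \<le> Lq / c0"
      using lowL[OF uX uX'] Lpnorm_cong_AE[OF ae] unfolding Lq_def by simp
    have "Kf * ip \<Omega> (\<lambda>x. \<bar>u x - u' x\<bar>) \<phi>1s \<le> Kf * (C' * Lpnorm \<Omega> p (\<lambda>x. u x - u' x))"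
      by (rule mult_left_mono[OF a5 Kf0'])
    also have "\<dots> \<le> Kf * (C' * (Lq / c0))"
      by (intro mult_left_mono a6 Kf0' C'0)
    finally have bI: "\<bar>I - I'\<bar> \<le> Kf * (C' * (Lq / c0))"
      unfolding II using a1 a2 a2' a3 a4 by linarith
    have hz: "?h z t = ?l1 * t - I / ?D" unfolding I_def u_def by (rule hform[OF zZ])
    have hz': "?h z' t' = ?l1 * t' - I' / ?D" unfolding I'_def u'_def by (rule hform[OF zZ'])
    have "?h z t - ?h z' t' = ?l1 * (t - t') - (I - I') / ?D"
      unfolding hz hz' by (simp add: algebra_simps diff_divide_distrib)
    then have "\<bar>?h z t - ?h z' t'\<bar> \<le> \<bar>?l1 * (t - t')\<bar> + \<bar>(I - I') / ?D\<bar>"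
      by (metis abs_triangle_ineq4)
    also have "\<bar>?l1 * (t - t')\<bar> = ?l1 * \<bar>t - t'\<bar>" using lam1_pos by (simp add: abs_mult)
    also have "\<bar>(I - I') / ?D\<bar> = \<bar>I - I'\<bar> / ?D" using Dpos by simp
    also have "\<bar>I - I'\<bar> / ?D \<le> Kf * (C' * (Lq / c0)) / ?D"
      by (rule divide_right_mono[OF bI]) (use Dpos in simp)
    also have "Kf * (C' * (Lq / c0)) / ?D = M * Lq" unfolding M_def by (simp add: field_simps)
    finally show ?thesis unfolding Lq_def by simp
  qed
  define K2 where "K2 = ?l1 + M + M * Lpnorm \<Omega> p \<phi>1"
  have part2: "\<bar>?h z t - ?h z' t'\<bar> \<le> K2 * (Lpnorm \<Omega> p (\<lambda>x. z x - z' x) + \<bar>t - t'\<bar>)"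
    if zZ: "z \<in> ?Z" and zZ': "z' \<in> ?Z" for z z' t t'
  proof -
    have f1: "(\<lambda>x. (z x + t * \<phi>1 x) - (z' x + t * \<phi>1 x)) = (\<lambda>x. z x - z' x)" by (rule ext) simp
    have f2: "(\<lambda>x. (z' x + t * \<phi>1 x) - (z' x + t' * \<phi>1 x)) = (\<lambda>x. (t - t') * \<phi>1 x)"
      by (rule ext) (simp add: algebra_simps)
    have A1: "\<bar>?h z t - ?h z' t\<bar> \<le> M * Lpnorm \<Omega> p (\<lambda>x. z x - z' x)"
      using gen[OF zZ zZ', of t t] unfolding f1 by simp
    have A2: "\<bar>?h z' t - ?h z' t'\<bar> \<le> ?l1 * \<bar>t - t'\<bar> + M * (\<bar>t - t'\<bar> * Lpnorm \<Omega> p \<phi>1)"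
      using gen[OF zZ' zZ', of t t'] unfolding f2 Lpnorm_scale[OF \<Omega>L m\<phi> p0] by simp
    define Lz where "Lz = Lpnorm \<Omega> p (\<lambda>x. z x - z' x)"
    define Lf where "Lf = Lpnorm \<Omega> p \<phi>1"
    have Lz0: "Lz \<ge> 0" unfolding Lz_def by (rule Lpnorm_nonneg)
    have Lf0: "Lf \<ge> 0" unfolding Lf_def by (rule Lpnorm_nonneg)
    have b1: "M * Lz \<le> K2 * Lz" unfolding K2_def Lf_def[symmetric]
      by (rule mult_right_mono[OF _ Lz0]) (use lam1_pos M0 Lf0 in simp)
    have b2: "?l1 * \<bar>t - t'\<bar> + M * (\<bar>t - t'\<bar> * Lf) = (?l1 + M * Lf) * \<bar>t - t'\<bar>"
      by (simp add: algebra_simps)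
    have b3: "(?l1 + M * Lf) * \<bar>t - t'\<bar> \<le> K2 * \<bar>t - t'\<bar>" unfolding K2_def Lf_def[symmetric]
      by (rule mult_right_mono) (use M0 in auto)
    have "\<bar>?h z t - ?h z' t'\<bar> \<le> \<bar>?h z t - ?h z' t\<bar> + \<bar>?h z' t - ?h z' t'\<bar>" by linarith
    then show ?thesis using A1 A2 b1 b2 b3 unfolding Lz_def[symmetric] Lf_def[symmetric]
      by (simp add: distrib_left)
  qed
  have part3: "\<exists>hh. bij_betw hh {u \<in> ?X. ae_eq \<Omega> (?F u) (\<lambda>x. zg x + tg * \<phi>1 x)} {t. ?h zg t = tg}"
    if zZ: "zg \<in> ?Z" for zg tg
  proof -
    let ?S = "{u \<in> ?X. ae_eq \<Omega> (?F u) (\<lambda>x. zg x + tg * \<phi>1 x)}"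
    have mztg: "(\<lambda>x. zg x + tg * \<phi>1 x) \<in> borel_measurable (lebesgue_on \<Omega>)"
      using ztL[OF zZ, of tg] unfolding Lp_def by auto
    have solU: "u = U zg (?coef u) \<and> ?h zg (?coef u) = tg" if uS: "u \<in> ?S" for u
    proof -
      have uX: "u \<in> ?X" and aeF: "AE x in lebesgue. x \<in> \<Omega> \<longrightarrow> ?F u x = zg x + tg * \<phi>1 x"
        using uS unfolding ae_eq_def by auto
      have aeF': "AE x in lebesgue. x \<in> \<Omega> \<longrightarrow> zg x + tg * \<phi>1 x = ?F u x"
        using aeF by eventually_elim auto
      have mF: "?F u \<in> borel_measurable (lebesgue_on \<Omega>)" by (rule meas_AE[OF \<Omega>L mztg aeF'])
      have "ip \<Omega> (?F u) \<phi>1s = ip \<Omega> (\<lambda>x. zg x + tg * \<phi>1 x) \<phi>1s"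
        by (rule ip_cong_AE[OF \<Omega>L mF mztg m\<phi>s aeF])
      then have "ip \<Omega> (?F u) \<phi>1s = tg * ?D" using ipzt[OF zZ] by simp
      then have cF: "?coef (?F u) = tg" unfolding coef_def using Dpos by simp
      define t where "t = ?coef u"
      have "ae_eq \<Omega> (?Ps u) (\<lambda>x. zg x + t * \<phi>1 x)"
        unfolding ae_eq_def using aeF by eventually_elim (simp add: psi_eq cF t_def)
      moreover have "ae_eq \<Omega> (?Ps (U zg t)) (\<lambda>x. zg x + t * \<phi>1 x)" by (rule UPs[OF zZ])
      ultimately have ut: "u = U zg t" by (rule uniq[OF uX UX[OF zZ]])
      have "?h zg t = ?coef (?F u)" unfolding hdef ut ..
      then have ht: "?h zg t = tg" using cF by simp
      show ?thesis by (rule conjI[OF ut[unfolded t_def] ht[unfolded t_def]])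
    qed
    show ?thesis
    proof (rule exI[of _ ?coef], rule bij_betw_imageI)
      show "inj_on ?coef ?S"
      proof (rule inj_onI)
        fix u v assume "u \<in> ?S" "v \<in> ?S" "?coef u = ?coef v"
        then show "u = v" using solU[of u] solU[of v] by metis
      qed
      show "?coef ` ?S = {t. ?h zg t = tg}"
      proof
        show "?coef ` ?S \<subseteq> {t. ?h zg t = tg}"
        proof
          fix t assume "t \<in> ?coef ` ?S"
          then obtain u where u: "u \<in> ?S" "t = ?coef u" by (rule imageE)
          show "t \<in> {t. ?h zg t = tg}" using conjunct2[OF solU[OF u(1)]] u(2) by simp
        qed
        show "{t. ?h zg t = tg} \<subseteq> ?coef ` ?S"
        proof
          fix t assume "t \<in> {t. ?h zg t = tg}"
          then have ht: "?h zg t = tg" by simp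
          have cen: "?coef (U zg t) = t" "AE x in lebesgue. x \<in> \<Omega> \<longrightarrow> ?F (U zg t) x = zg x + ?h zg t * \<phi>1 x"
            using central[OF zZ, of t] by auto
          have "U zg t \<in> ?S" using UX[OF zZ, of t] cen(2) ht unfolding ae_eq_def by auto
          then show "t \<in> ?coef ` ?S" by (rule image_eqI[where f="?coef", OF cen(1)[symmetric]])
        qed
      qed
    qed
  qed
  show ?thesis
  proof (intro conjI)
    show "\<exists>K. \<forall>z\<in>?Z. \<forall>t s. Xnorm \<Omega> p (\<lambda>x. ?Pinv (\<lambda>y. z y + t * \<phi>1 y) x - ?Pinv (\<lambda>y. z y + s * \<phi>1 y) x) \<le> K * \<bar>t - s\<bar>"
      by (intro exI[of _ "Lpnorm \<Omega> p \<phi>1 / c0"] ballI allI part1[unfolded U_def])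
    show "\<exists>K. \<forall>z\<in>?Z. \<forall>z'\<in>?Z. \<forall>t t'. \<bar>?h z t - ?h z' t'\<bar> \<le> K * (Lpnorm \<Omega> p (\<lambda>x. z x - z' x) + \<bar>t - t'\<bar>)"
      by (intro exI[of _ K2] ballI allI part2)
    show "\<forall>zg\<in>?Z. \<forall>tg. \<exists>hh. bij_betw hh {u \<in> ?X. ae_eq \<Omega> (?F u) (\<lambda>x. zg x + tg * \<phi>1 x)} {t. ?h zg t = tg}"
      by (intro ballI allI part3)
  qed
qed

end
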